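(* Let $f,g\in R=A[t;\sigma,\delta]$ with $g$ not a zero divisor in $R$ and $Rf+Rg=R$. Suppose there is $m\in R$ with $Rm=Rf\cap Rg$, and let $f',g'\in R$ satisfy $m=f'g=g'f$. Let $T$ be any $(\sigma,\delta)$-pseudo-linear transformation on a left $A$-module $V$. Then: (a) $R/Rf'\cong R/Rf$ as left $R$-modules (via $h+Rf'\mapsto hg+Rf$); (b) $g(T)(\ker f(T))=\ker f'(T)$; (c) $\ker m(T)=\ker f(T)\oplus\ker g(T)$.
   Context: $A$ is a ring with $1$, $\sigma$ a unital ring endomorphism, $\delta$ a $\sigma$-derivation ($\delta$ additive, $\delta(ab)=\sigma(a)\delta(b)+\delta(a)b$); $R=A[t;\sigma,\delta]$ is the Ore extension with $ta=\sigma(a)t+\delta(a)$. A $(\sigma,\delta)$-pseudo-linear transformation on a left $A$-module $V$ is an additive $T:V\to V$ with $T(\alpha v)=\sigma(\alpha)T(v)+\delta(\alpha)v$; for $h=\sum a_it^i\in R$, $h(T)(v)=\sum a_iT^i(v)$. *)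

theory Defs
  imports "HOL-Computational_Algebra.Polynomial"
begin

text \<open>Elements are represented by their
  coefficient sequences (sum of a_i t^i, coefficients written on the left),
  using the type 'a poly only as a carrier of finitely supported coefficient
  sequences together with its (coefficientwise) addition. The multiplication
  is the Ore multiplication determined by t a = sigma(a) t + delta(a).\<close>

definition ore_lmult :: "'a::ring_1 \<Rightarrow> 'a poly \<Rightarrow> 'a poly" where
  "ore_lmult a p = map_poly (\<lambda>c. a * c) p"

definition ore_tmul :: "('a::ring_1 \<Rightarrow> 'a) \<Rightarrow> ('a \<Rightarrow> 'a) \<Rightarrow> 'a poly \<Rightarrow> 'a poly" where
  "ore_tmul \<sigma> \<delta> p = pCons 0 (map_poly \<sigma> p) + map_poly \<delta> p"

definition ore_mult :: "('a::ring_1 \<Rightarrow> 'a) \<Rightarrow> ('a \<Rightarrow> 'a) \<Rightarrow> 'a poly \<Rightarrow> 'a poly \<Rightarrow> 'a poly" where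
  "ore_mult \<sigma> \<delta> p q = (\<Sum>i\<le>degree p. ore_lmult (coeff p i) ((ore_tmul \<sigma> \<delta> ^^ i) q))"

definition ring_endo :: "('a::ring_1 \<Rightarrow> 'a) \<Rightarrow> bool" where
  "ring_endo \<sigma> \<longleftrightarrow> (\<forall>a b. \<sigma> (a + b) = \<sigma> a + \<sigma> b) \<and> (\<forall>a b. \<sigma> (a * b) = \<sigma> a * \<sigma> b) \<and> \<sigma> 1 = 1"

definition sigma_derivation :: "('a::ring_1 \<Rightarrow> 'a) \<Rightarrow> ('a \<Rightarrow> 'a) \<Rightarrow> bool" where
  "sigma_derivation \<sigma> \<delta> \<longleftrightarrow> (\<forall>a b. \<delta> (a + b) = \<delta> a + \<delta> b) \<and>
     (\<forall>a b. \<delta> (a * b) = \<sigma> a * \<delta> b + \<delta> a * b)"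

definition left_module :: "('a::ring_1 \<Rightarrow> 'v::ab_group_add \<Rightarrow> 'v) \<Rightarrow> bool" where
  "left_module smul \<longleftrightarrow>
     (\<forall>a x y. smul a (x + y) = smul a x + smul a y) \<and>
     (\<forall>a b x. smul (a + b) x = smul a x + smul b x) \<and>
     (\<forall>a b x. smul (a * b) x = smul a (smul b x)) \<and>
     (\<forall>x. smul 1 x = x)"

definition pseudo_linear ::
  "('a::ring_1 \<Rightarrow> 'a) \<Rightarrow> ('a \<Rightarrow> 'a) \<Rightarrow> ('a \<Rightarrow> 'v::ab_group_add \<Rightarrow> 'v) \<Rightarrow> ('v \<Rightarrow> 'v) \<Rightarrow> bool" where
  "pseudo_linear \<sigma> \<delta> smul T \<longleftrightarrow>
     (\<forall>x y. T (x + y) = T x + T y) \<and>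
     (\<forall>a v. T (smul a v) = smul (\<sigma> a) (T v) + smul (\<delta> a) v)"

definition ore_eval :: "('a::ring_1 \<Rightarrow> 'v::ab_group_add \<Rightarrow> 'v) \<Rightarrow> 'a poly \<Rightarrow> ('v \<Rightarrow> 'v) \<Rightarrow> 'v \<Rightarrow> 'v" where
  "ore_eval smul h T v = (\<Sum>i\<le>degree h. smul (coeff h i) ((T ^^ i) v))"

definition ore_ker :: "('a::ring_1 \<Rightarrow> 'v::ab_group_add \<Rightarrow> 'v) \<Rightarrow> 'a poly \<Rightarrow> ('v \<Rightarrow> 'v) \<Rightarrow> 'v set" where
  "ore_ker smul h T = {v. ore_eval smul h T v = 0}"

definition ore_lideal :: "('a::ring_1 \<Rightarrow> 'a) \<Rightarrow> ('a \<Rightarrow> 'a) \<Rightarrow> 'a poly \<Rightarrow> 'a poly set" where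
  "ore_lideal \<sigma> \<delta> h = {ore_mult \<sigma> \<delta> r h | r. True}"

end

theory Submission
  imports Defs
begin


lemma degree_map_poly_le0: "f 0 = 0 \<Longrightarrow> degree (map_poly f p) \<le> degree p"
  by (rule degree_le) (simp add: coeff_map_poly coeff_eq_0)

lemma endo0: "ring_endo \<sigma> \<Longrightarrow> \<sigma> 0 = 0"
proof -
  assume "ring_endo \<sigma>"
  then have "\<sigma> (0 + 0) = \<sigma> 0 + \<sigma> 0" unfolding ring_endo_def by blast
  then show ?thesis by simp
qed

lemma deriv0: "sigma_derivation \<sigma> \<delta> \<Longrightarrow> \<delta> 0 = 0"
proof -
  assume "sigma_derivation \<sigma> \<delta>"
  then have "\<delta> (0 + 0) = \<delta> 0 + \<delta> 0" unfolding sigma_derivation_def by blast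
  then show ?thesis by simp
qed

context
  fixes smul :: "'a::ring_1 \<Rightarrow> 'v::ab_group_add \<Rightarrow> 'v"
  assumes V: "left_module smul"
begin

lemma sm_addv: "smul a (x + y) = smul a x + smul a y"
  using V unfolding left_module_def by blast
lemma sm_adds: "smul (a + b) x = smul a x + smul b x"
  using V unfolding left_module_def by blast
lemma sm_mult: "smul (a * b) x = smul a (smul b x)"
  using V unfolding left_module_def by blast
lemma sm_one: "smul 1 x = x"
  using V unfolding left_module_def by blast
lemma sm_zerov: "smul a 0 = 0"
proof -
  have "smul a (0 + 0) = smul a 0 + smul a 0" by (rule sm_addv)
  then show ?thesis by simp
qed
lemma sm_zeros: "smul 0 x = 0"
proof -
  have "smul (0 + 0) x = smul 0 x + smul 0 x" by (rule sm_adds)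
  then show ?thesis by simp
qed
lemma sm_sumv: "smul a (\<Sum>i\<in>A. f i) = (\<Sum>i\<in>A. smul a (f i))"
  by (induction A rule: infinite_finite_induct) (simp_all add: sm_zerov sm_addv)

lemma eval_bound:
  assumes "degree h \<le> N"
  shows "ore_eval smul h T v = (\<Sum>i\<le>N. smul (coeff h i) ((T ^^ i) v))"
  unfolding ore_eval_def
  by (rule sum.mono_neutral_left) (use assms in \<open>auto simp: coeff_eq_0 sm_zeros\<close>)

lemma eval_add: "ore_eval smul (p + q) T v = ore_eval smul p T v + ore_eval smul q T v"
proof -
  let ?N = "max (degree p) (degree q)"
  have "ore_eval smul (p + q) T v = (\<Sum>i\<le>?N. smul (coeff (p+q) i) ((T ^^ i) v))"
    by (rule eval_bound) (simp add: degree_add_le)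
  also have "\<dots> = (\<Sum>i\<le>?N. smul (coeff p i) ((T ^^ i) v)) + (\<Sum>i\<le>?N. smul (coeff q i) ((T ^^ i) v))"
    by (simp add: sm_adds sum.distrib)
  also have "\<dots> = ore_eval smul p T v + ore_eval smul q T v"
    by (simp add: eval_bound[of p ?N T v] eval_bound[of q ?N T v])
  finally show ?thesis .
qed

lemma eval_zero: "ore_eval smul 0 T v = 0"
  by (simp add: ore_eval_def sm_zeros)

lemma eval_one: "ore_eval smul [:1:] T v = v"
  by (simp add: ore_eval_def sm_one)

lemma eval_minus: "ore_eval smul (- p) T v = - ore_eval smul p T v"
  using eval_add[of p "-p" T v] by (simp add: eval_zero eq_neg_iff_add_eq_0 add.commute)

lemma eval_diff: "ore_eval smul (p - q) T v = ore_eval smul p T v - ore_eval smul q T v"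
  using eval_add[of p "-q" T v] by (simp add: eval_minus)

lemma eval_sum: "ore_eval smul (\<Sum>i\<in>A. p i) T v = (\<Sum>i\<in>A. ore_eval smul (p i) T v)"
  by (induction A rule: infinite_finite_induct) (simp_all add: eval_zero eval_add)

lemma eval_lmult: "ore_eval smul (ore_lmult a p) T v = smul a (ore_eval smul p T v)"
proof -
  have "ore_eval smul (ore_lmult a p) T v = (\<Sum>i\<le>degree p. smul (coeff (ore_lmult a p) i) ((T ^^ i) v))"
    by (rule eval_bound) (simp add: ore_lmult_def degree_map_poly_le0)
  also have "\<dots> = smul a (ore_eval smul p T v)"
    by (simp add: ore_lmult_def coeff_map_poly ore_eval_def sm_sumv sm_mult)
  finally show ?thesis .
qed

context
  fixes \<sigma> \<delta> :: "'a \<Rightarrow> 'a" and T :: "'v \<Rightarrow> 'v"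
  assumes sig: "ring_endo \<sigma>" and del: "sigma_derivation \<sigma> \<delta>"
    and TT: "pseudo_linear \<sigma> \<delta> smul T"
begin

lemma T_add: "T (x + y) = T x + T y"
  using TT unfolding pseudo_linear_def by blast
lemma T_smul: "T (smul a v) = smul (\<sigma> a) (T v) + smul (\<delta> a) v"
  using TT unfolding pseudo_linear_def by blast
lemma T_zero: "T 0 = 0"
proof -
  have "T (0 + 0) = T 0 + T 0" by (rule T_add)
  then show ?thesis by simp
qed
lemma T_sum: "T (\<Sum>i\<in>A. f i) = (\<Sum>i\<in>A. T (f i))"
  by (induction A rule: infinite_finite_induct) (simp_all add: T_zero T_add)
lemma Tpow_add: "(T ^^ n) (x + y) = (T ^^ n) x + (T ^^ n) y"
  by (induction n) (simp_all add: T_add)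
lemma Tpow_zero: "(T ^^ n) 0 = 0"
  by (induction n) (simp_all add: T_zero)

lemma eval_vadd: "ore_eval smul h T (x + y) = ore_eval smul h T x + ore_eval smul h T y"
  by (simp add: ore_eval_def Tpow_add sm_addv sum.distrib)

lemma eval_vzero: "ore_eval smul h T 0 = 0"
  by (simp add: ore_eval_def Tpow_zero sm_zerov)

lemma eval_tmul: "ore_eval smul (ore_tmul \<sigma> \<delta> p) T v = T (ore_eval smul p T v)"
proof -
  have s0: "\<sigma> 0 = 0" using sig by (rule endo0)
  have d0: "\<delta> 0 = 0" using del by (rule deriv0)
  let ?d = "degree p"
  have A: "ore_eval smul (pCons 0 (map_poly \<sigma> p)) T v
      = (\<Sum>i\<le>?d. smul (\<sigma> (coeff p i)) ((T ^^ Suc i) v))"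
  proof -
    have "ore_eval smul (pCons 0 (map_poly \<sigma> p)) T v
        = (\<Sum>i\<le>Suc ?d. smul (coeff (pCons 0 (map_poly \<sigma> p)) i) ((T ^^ i) v))"
      by (rule eval_bound) (meson Suc_le_mono degree_map_poly_le0 degree_pCons_le le_trans s0)
    also have "\<dots> = (\<Sum>i\<le>?d. smul (\<sigma> (coeff p i)) ((T ^^ Suc i) v))"
      by (subst sum.atMost_Suc_shift) (simp add: sm_zeros coeff_map_poly s0)
    finally show ?thesis .
  qed
  have B: "ore_eval smul (map_poly \<delta> p) T v = (\<Sum>i\<le>?d. smul (\<delta> (coeff p i)) ((T ^^ i) v))"
    by (subst eval_bound[of _ ?d]) (simp_all add: degree_map_poly_le0 d0 coeff_map_poly)
  have "T (ore_eval smul p T v) = (\<Sum>i\<le>?d. T (smul (coeff p i) ((T ^^ i) v)))"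
    by (simp add: ore_eval_def T_sum)
  also have "\<dots> = (\<Sum>i\<le>?d. smul (\<sigma> (coeff p i)) ((T ^^ Suc i) v)) + (\<Sum>i\<le>?d. smul (\<delta> (coeff p i)) ((T ^^ i) v))"
    by (simp add: T_smul sum.distrib)
  finally show ?thesis unfolding ore_tmul_def eval_add A B by simp
qed

lemma eval_tmul_pow: "ore_eval smul ((ore_tmul \<sigma> \<delta> ^^ n) p) T v = (T ^^ n) (ore_eval smul p T v)"
  by (induction n) (simp_all add: eval_tmul)

lemma eval_mult: "ore_eval smul (ore_mult \<sigma> \<delta> p q) T v = ore_eval smul p T (ore_eval smul q T v)"
  unfolding ore_mult_def eval_sum eval_lmult eval_tmul_pow by (simp add: ore_eval_def)

end
end

lemma R_module: "left_module (ore_lmult :: 'a::ring_1 \<Rightarrow> 'a poly \<Rightarrow> 'a poly)"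
  unfolding left_module_def ore_lmult_def
  by (auto simp: poly_eq_iff coeff_map_poly algebra_simps)

lemma R_pl:
  assumes sig: "ring_endo \<sigma>" and del: "sigma_derivation \<sigma> \<delta>"
  shows "pseudo_linear \<sigma> \<delta> ore_lmult (ore_tmul \<sigma> \<delta>)"
proof -
  have s0: "\<sigma> 0 = 0" using sig by (rule endo0)
  have d0: "\<delta> 0 = 0" using del by (rule deriv0)
  have sa: "\<And>a b. \<sigma> (a + b) = \<sigma> a + \<sigma> b" "\<And>a b. \<sigma> (a * b) = \<sigma> a * \<sigma> b"
    using sig unfolding ring_endo_def by blast+
  have da: "\<And>a b. \<delta> (a + b) = \<delta> a + \<delta> b" "\<And>a b. \<delta> (a * b) = \<sigma> a * \<delta> b + \<delta> a * b"
    using del unfolding sigma_derivation_def by blast+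
  show ?thesis
    unfolding pseudo_linear_def ore_tmul_def ore_lmult_def
    by (auto simp: poly_eq_iff coeff_map_poly coeff_pCons' s0 d0 sa da algebra_simps)
qed

lemma mult_is_eval: "ore_mult \<sigma> \<delta> h q = ore_eval ore_lmult h (ore_tmul \<sigma> \<delta>) q"
  unfolding ore_mult_def ore_eval_def ..


context
  fixes \<sigma> \<delta> :: "'a::ring_1 \<Rightarrow> 'a"
  assumes sig: "ring_endo \<sigma>" and del: "sigma_derivation \<sigma> \<delta>"
begin

lemma M_assoc: "ore_mult \<sigma> \<delta> (ore_mult \<sigma> \<delta> p q) r = ore_mult \<sigma> \<delta> p (ore_mult \<sigma> \<delta> q r)"
  using eval_mult[OF R_module sig del R_pl[OF sig del], of p q r] by (simp only: mult_is_eval[symmetric])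

lemma M_addl: "ore_mult \<sigma> \<delta> (p + q) r = ore_mult \<sigma> \<delta> p r + ore_mult \<sigma> \<delta> q r"
  unfolding mult_is_eval by (rule eval_add[OF R_module])

lemma M_diffl: "ore_mult \<sigma> \<delta> (p - q) r = ore_mult \<sigma> \<delta> p r - ore_mult \<sigma> \<delta> q r"
  unfolding mult_is_eval by (rule eval_diff[OF R_module])

lemma M_minusl: "ore_mult \<sigma> \<delta> (- p) r = - ore_mult \<sigma> \<delta> p r"
  unfolding mult_is_eval by (rule eval_minus[OF R_module])

lemma M_zerol: "ore_mult \<sigma> \<delta> 0 r = 0"
  unfolding mult_is_eval by (rule eval_zero[OF R_module])

lemma M_onel: "ore_mult \<sigma> \<delta> [:1:] r = r"
  unfolding mult_is_eval by (rule eval_one[OF R_module])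

lemma M_addr: "ore_mult \<sigma> \<delta> h (p + q) = ore_mult \<sigma> \<delta> h p + ore_mult \<sigma> \<delta> h q"
  unfolding mult_is_eval by (rule eval_vadd[OF R_module sig del R_pl[OF sig del]])

lemma M_diffr: "ore_mult \<sigma> \<delta> h (p - q) = ore_mult \<sigma> \<delta> h p - ore_mult \<sigma> \<delta> h q"
  using M_addr[of h "p - q" q] by (simp add: algebra_simps)

lemma tmul_pow_one: "(ore_tmul \<sigma> \<delta> ^^ i) [:1:] = monom 1 i"
proof (induction i)
  case 0
  then show ?case by (simp add: monom_0)
next
  case (Suc i)
  have s0: "\<sigma> 0 = 0" using sig by (rule endo0)
  have d0: "\<delta> 0 = 0" using del by (rule deriv0)
  have s1: "\<sigma> 1 = 1" using sig unfolding ring_endo_def by blast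
  have "\<delta> (1 * 1) = \<sigma> 1 * \<delta> 1 + \<delta> 1 * 1" using del unfolding sigma_derivation_def by blast
  then have d1: "\<delta> 1 = 0" using s1 by simp
  show ?case using Suc
    by (auto simp add: ore_tmul_def poly_eq_iff coeff_map_poly coeff_pCons' s0 d0 s1 d1)
qed

lemma M_oner: "ore_mult \<sigma> \<delta> h [:1:] = h"
proof -
  have "ore_mult \<sigma> \<delta> h [:1:] = (\<Sum>i\<le>degree h. monom (coeff h i) i)"
    unfolding ore_mult_def tmul_pow_one
    by (rule sum.cong) (auto simp: ore_lmult_def poly_eq_iff coeff_map_poly)
  then show ?thesis by (simp add: poly_as_sum_of_monoms)
qed

end

theorem proposition1p16:
  fixes \<sigma> \<delta> :: "'a::ring_1 \<Rightarrow> 'a"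
    and f g m f' g' :: "'a poly"
    and smul :: "'a \<Rightarrow> 'v::ab_group_add \<Rightarrow> 'v"
    and T :: "'v \<Rightarrow> 'v"
  assumes sigma: "ring_endo \<sigma>"
    and delta: "sigma_derivation \<sigma> \<delta>"
    and g_nzd: "\<forall>h. h \<noteq> 0 \<longrightarrow> ore_mult \<sigma> \<delta> h g \<noteq> 0 \<and> ore_mult \<sigma> \<delta> g h \<noteq> 0"
    and comax: "\<forall>h. \<exists>a b. h = ore_mult \<sigma> \<delta> a f + ore_mult \<sigma> \<delta> b g"
    and lcm: "ore_lideal \<sigma> \<delta> m = ore_lideal \<sigma> \<delta> f \<inter> ore_lideal \<sigma> \<delta> g"
    and m1: "m = ore_mult \<sigma> \<delta> f' g"
    and m2: "m = ore_mult \<sigma> \<delta> g' f"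
    and V: "left_module smul"
    and T: "pseudo_linear \<sigma> \<delta> smul T"
  shows
    "((\<forall>h1 h2. h1 - h2 \<in> ore_lideal \<sigma> \<delta> f' \<longrightarrow>
                ore_mult \<sigma> \<delta> h1 g - ore_mult \<sigma> \<delta> h2 g \<in> ore_lideal \<sigma> \<delta> f) \<and>
      (\<forall>h1 h2. ore_mult \<sigma> \<delta> (h1 + h2) g - (ore_mult \<sigma> \<delta> h1 g + ore_mult \<sigma> \<delta> h2 g)
                \<in> ore_lideal \<sigma> \<delta> f) \<and>
      (\<forall>r h. ore_mult \<sigma> \<delta> (ore_mult \<sigma> \<delta> r h) g - ore_mult \<sigma> \<delta> r (ore_mult \<sigma> \<delta> h g)
                \<in> ore_lideal \<sigma> \<delta> f) \<and>
      (\<forall>h1 h2. ore_mult \<sigma> \<delta> h1 g - ore_mult \<sigma> \<delta> h2 g \<in> ore_lideal \<sigma> \<delta> f \<longrightarrow>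
                h1 - h2 \<in> ore_lideal \<sigma> \<delta> f') \<and>
      (\<forall>k. \<exists>h. k - ore_mult \<sigma> \<delta> h g \<in> ore_lideal \<sigma> \<delta> f))
   \<and> ore_eval smul g T ` ore_ker smul f T = ore_ker smul f' T
   \<and> ore_ker smul f T \<inter> ore_ker smul g T = {0}
   \<and> ore_ker smul m T = {x + y | x y. x \<in> ore_ker smul f T \<and> y \<in> ore_ker smul g T}"
proof -
  let ?M = "ore_mult \<sigma> \<delta>"
  let ?I = "ore_lideal \<sigma> \<delta>"
  let ?E = "\<lambda>h. ore_eval smul h T"
  have Iiff: "\<And>x h. x \<in> ?I h \<longleftrightarrow> (\<exists>r. x = ?M r h)" unfolding ore_lideal_def by blast
  note A = M_assoc[OF sigma delta]
  note Ml = M_addl[OF sigma delta] M_diffl[OF sigma delta] M_minusl[OF sigma delta]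
    M_zerol[OF sigma delta] M_onel[OF sigma delta]
  note Mr = M_addr[OF sigma delta] M_diffr[OF sigma delta] M_oner[OF sigma delta]
  have EM: "\<And>p q v. ?E (?M p q) v = ?E p (?E q v)" by (rule eval_mult[OF V sigma delta T])
  have E0: "\<And>h. ?E h 0 = 0" by (rule eval_vzero[OF V sigma delta T])
  have E1: "\<And>v. ?E [:1:] v = v" by (rule eval_one[OF V])
  have Eadd: "\<And>p q v. ?E (p + q) v = ?E p v + ?E q v" by (rule eval_add[OF V])
  have Evadd: "\<And>h x y. ?E h (x + y) = ?E h x + ?E h y" by (rule eval_vadd[OF V sigma delta T])
  have Z: "0 \<in> ?I f" using Iiff Ml(4) by metis
  obtain a b where ab: "[:1:] = ?M a f + ?M b g" using comax by blast
  have a4: "\<And>h1 h2. ?M h1 g - ?M h2 g \<in> ?I f \<Longrightarrow> h1 - h2 \<in> ?I f'"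
  proof -
    fix h1 h2 assume "?M h1 g - ?M h2 g \<in> ?I f"
    then have "?M (h1 - h2) g \<in> ?I f" by (simp add: Ml)
    moreover have "?M (h1 - h2) g \<in> ?I g" using Iiff by blast
    ultimately have "?M (h1 - h2) g \<in> ?I m" using lcm by blast
    then obtain s where "?M (h1 - h2) g = ?M s m" using Iiff by blast
    then have "?M (h1 - h2) g = ?M (?M s f') g" by (simp add: m1 A)
    then have "?M (h1 - h2 - ?M s f') g = 0" by (simp add: Ml)
    then have "h1 - h2 - ?M s f' = 0" using g_nzd by blast
    then show "h1 - h2 \<in> ?I f'" using Iiff by auto
  qed
  have fbg: "?M f (?M b g) = ?M ([:1:] - ?M f a) f"
  proof -
    have "?M b g = [:1:] - ?M a f" using ab by (simp add: algebra_simps)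
    then show ?thesis by (simp add: Mr Ml A)
  qed
  have gaf: "?M g (?M a f) = ?M ([:1:] - ?M g b) g"
  proof -
    have "?M a f = [:1:] - ?M b g" using ab by (simp add: algebra_simps)
    then show ?thesis by (simp add: Mr Ml A)
  qed
  have partA: "((\<forall>h1 h2. h1 - h2 \<in> ?I f' \<longrightarrow> ?M h1 g - ?M h2 g \<in> ?I f) \<and>
      (\<forall>h1 h2. ?M (h1 + h2) g - (?M h1 g + ?M h2 g) \<in> ?I f) \<and>
      (\<forall>r h. ?M (?M r h) g - ?M r (?M h g) \<in> ?I f) \<and>
      (\<forall>h1 h2. ?M h1 g - ?M h2 g \<in> ?I f \<longrightarrow> h1 - h2 \<in> ?I f') \<and>
      (\<forall>k. \<exists>h. k - ?M h g \<in> ?I f))"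
  proof (intro conjI allI impI)
    fix h1 h2 assume "h1 - h2 \<in> ?I f'"
    then obtain r where r: "h1 - h2 = ?M r f'" using Iiff by blast
    have "?M h1 g - ?M h2 g = ?M (h1 - h2) g" by (simp add: Ml)
    also have "\<dots> = ?M r m" by (simp add: r A m1)
    also have "\<dots> = ?M (?M r g') f" by (simp add: A m2)
    finally show "?M h1 g - ?M h2 g \<in> ?I f" using Iiff by blast
  next
    fix h1 h2 show "?M (h1 + h2) g - (?M h1 g + ?M h2 g) \<in> ?I f"
      using Z by (simp add: Ml)
  next
    fix r h show "?M (?M r h) g - ?M r (?M h g) \<in> ?I f"
      using Z by (simp add: Ml A)
  next
    fix h1 h2 assume "?M h1 g - ?M h2 g \<in> ?I f"
    then show "h1 - h2 \<in> ?I f'" by (rule a4)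
  next
    fix k
    obtain c d where "k = ?M c f + ?M d g" using comax by blast
    then have "k - ?M d g \<in> ?I f" using Iiff by auto
    then show "\<exists>h. k - ?M h g \<in> ?I f" by blast
  qed
  have partB: "?E g ` ore_ker smul f T = ore_ker smul f' T"
  proof
    show "?E g ` ore_ker smul f T \<subseteq> ore_ker smul f' T"
    proof
      fix w assume "w \<in> ?E g ` ore_ker smul f T"
      then obtain v where v: "?E f v = 0" "w = ?E g v" unfolding ore_ker_def by blast
      have "?E f' w = ?E m v" using v by (simp add: m1 EM)
      also have "\<dots> = 0" using v by (simp add: m2 EM E0)
      finally show "w \<in> ore_ker smul f' T" unfolding ore_ker_def by blast
    qed
  next
    show "ore_ker smul f' T \<subseteq> ?E g ` ore_ker smul f T"
    proof
      fix w assume "w \<in> ore_ker smul f' T"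
      then have w: "?E f' w = 0" unfolding ore_ker_def by blast
      have "?M (?M f b) g - ?M 0 g = ?M ([:1:] - ?M f a) f" by (simp only: Ml(4) A diff_zero fbg)
      then have "?M (?M f b) g - ?M 0 g \<in> ?I f" using Iiff by blast
      then have "?M f b - 0 \<in> ?I f'" by (rule a4)
      then obtain s where s: "?M f b = ?M s f'" using Iiff by auto
      have "?M (?M g b) g - ?M [:1:] g = ?M (- ?M g a) f"
      proof -
        have "?M b g = [:1:] - ?M a f" using ab by (simp add: algebra_simps)
        then show ?thesis by (simp add: A Mr Ml)
      qed
      then have "?M (?M g b) g - ?M [:1:] g \<in> ?I f" using Iiff by blast
      then have "?M g b - [:1:] \<in> ?I f'" by (rule a4)
      then obtain s' where s': "?M g b = [:1:] + ?M s' f'" using Iiff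
        by (metis add.commute diff_add_cancel)
      have "?E f (?E b w) = 0" by (simp add: EM[symmetric] s EM w E0)
      moreover have "?E g (?E b w) = w"
        by (simp add: EM[symmetric] s' Eadd E1 EM w E0)
      ultimately show "w \<in> ?E g ` ore_ker smul f T" unfolding ore_ker_def by force
    qed
  qed
  have partC1: "ore_ker smul f T \<inter> ore_ker smul g T = {0}"
  proof
    show "ore_ker smul f T \<inter> ore_ker smul g T \<subseteq> {0}"
    proof
      fix v assume "v \<in> ore_ker smul f T \<inter> ore_ker smul g T"
      then have v: "?E f v = 0" "?E g v = 0" unfolding ore_ker_def by auto
      have "v = ?E [:1:] v" by (simp add: E1)
      also have "\<dots> = 0" by (simp add: ab Eadd EM v E0 del: pCons_one)
      finally show "v \<in> {0}" by simp
    qed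
  next
    show "{0} \<subseteq> ore_ker smul f T \<inter> ore_ker smul g T" by (simp add: ore_ker_def E0)
  qed
  have partC2: "ore_ker smul m T = {x + y | x y. x \<in> ore_ker smul f T \<and> y \<in> ore_ker smul g T}"
  proof
    show "ore_ker smul m T \<subseteq> {x + y | x y. x \<in> ore_ker smul f T \<and> y \<in> ore_ker smul g T}"
    proof
      fix v assume "v \<in> ore_ker smul m T"
      then have v: "?E m v = 0" unfolding ore_ker_def by blast
      have "?M f (?M b g) \<in> ?I m"
      proof -
        have "?M f (?M b g) \<in> ?I f" using fbg Iiff by blast
        moreover have "?M f (?M b g) \<in> ?I g" using Iiff by (metis A)
        ultimately show ?thesis using lcm by blast
      qed
      then obtain s where s: "?M f (?M b g) = ?M s m" using Iiff by blast
      have "?M g (?M a f) \<in> ?I m"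
      proof -
        have "?M g (?M a f) \<in> ?I g" using gaf Iiff by blast
        moreover have "?M g (?M a f) \<in> ?I f" using Iiff by (metis A)
        ultimately show ?thesis using lcm by blast
      qed
      then obtain s' where s': "?M g (?M a f) = ?M s' m" using Iiff by blast
      have x: "?E f (?E (?M b g) v) = 0" by (simp add: EM[symmetric] s) (simp add: EM v E0)
      have y: "?E g (?E (?M a f) v) = 0" by (simp add: EM[symmetric] s') (simp add: EM v E0)
      have "v = ?E [:1:] v" by (simp add: E1)
      also have "\<dots> = ?E (?M b g) v + ?E (?M a f) v" by (simp add: ab Eadd add.commute del: pCons_one)
      finally show "v \<in> {x + y | x y. x \<in> ore_ker smul f T \<and> y \<in> ore_ker smul g T}"
        using x y unfolding ore_ker_def by blast
    qed
  next
    show "{x + y | x y. x \<in> ore_ker smul f T \<and> y \<in> ore_ker smul g T} \<subseteq> ore_ker smul m T"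
    proof
      fix z assume "z \<in> {x + y | x y. x \<in> ore_ker smul f T \<and> y \<in> ore_ker smul g T}"
      then obtain x y where z: "z = x + y" "?E f x = 0" "?E g y = 0" unfolding ore_ker_def by blast
      have "?E m x = 0" using z by (simp add: m2 EM E0)
      moreover have "?E m y = 0" using z by (simp add: m1 EM E0)
      ultimately show "z \<in> ore_ker smul m T" unfolding ore_ker_def by (simp add: z Evadd)
    qed
  qed
  show ?thesis using partA partB partC1 partC2 by blast
qed

end
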